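(* Let $A(x)$ be an $n\times n$ matrix function, holomorphic and single-valued in a punctured disc $0<|x-x_0|<\rho_0$, with Laurent expansion $A(x)=\frac{a_{-1}}{x-x_0}+\sum_{k\ge 0}a_k(x-x_0)^k$. Let $W(x)$ be an invertible (for $x\ne x_0$) solution of $\frac{dW}{dx}=A(x)W$ of the form $W(x)=\sum_{k\ge m}b_k(x-x_0)^k$ with $b_m\neq0$, and suppose $W^{-1}(x)=\sum_{k\ge p}c_k(x-x_0)^k$ with $c_p\neq 0$ (both series convergent in the punctured disc, $m,p\in\mathbb Z$). Then $m$ and $-p$ are eigenvalues of $a_{-1}$, and the matrix $a_{-1}$ is either a scalar matrix or has at least two different integer eigenvalues. *)

theory Defs
  imports "HOL-Analysis.Analysis"
begin

definition cscale :: "complex \<Rightarrow> complex ^ 'n ^ 'm \<Rightarrow> complex ^ 'n ^ 'm" where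
  "cscale c M = (\<chi> i j. c * M $ i $ j)"

definition is_eigenvalue :: "complex ^ 'n ^ 'n \<Rightarrow> complex \<Rightarrow> bool" where
  "is_eigenvalue M l \<longleftrightarrow> (\<exists>v. v \<noteq> 0 \<and> M *v v = l *s v)"

definition is_scalar_matrix :: "complex ^ 'n ^ 'n \<Rightarrow> bool" where
  "is_scalar_matrix M \<longleftrightarrow> (\<exists>c. M = mat c)"

end

theory Submission
  imports Defs
begin

definition PS :: "(nat \<Rightarrow> complex) \<Rightarrow> complex \<Rightarrow> complex" where
  "PS f t = (\<Sum>k. f k * t ^ k)"

lemma PS_props:
  fixes f :: "nat \<Rightarrow> complex" and r :: real
  assumes sK: "summable (\<lambda>k. f k * (complex_of_real r) ^ k)" and r: "r > 0" and t: "cmod t < r"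
  shows "(PS f has_field_derivative PS (diffs f) t) (at t)" "isCont (PS f) t" "isCont (PS (diffs f)) t"
proof -
  have nK: "norm (complex_of_real r) = r" using r by simp
  show D: "(PS f has_field_derivative PS (diffs f) t) (at t)"
    unfolding PS_def[abs_def] using termdiffs_strong[OF sK] t nK by simp
  show "isCont (PS f) t" using DERIV_isCont[OF D] .
  define r' where "r' = (cmod t + r) / 2"
  have r': "cmod t < r'" "r' < r" using t by (auto simp: r'_def)
  have "summable (\<lambda>n. diffs f n * (complex_of_real r') ^ n)"
  proof (rule termdiff_converges[of _ r])
    have "r' > 0" unfolding r'_def using r by (simp add: add_nonneg_pos)
    then show "norm (complex_of_real r') < r" using r' by simp
    show "summable (\<lambda>n. f n * x ^ n)" if "norm x < r" for x
      using powser_inside[OF sK, of x] nK that by simp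
  qed
  then show "isCont (PS (diffs f)) t"
    unfolding PS_def[abs_def] using isCont_powser[of _ "complex_of_real r'"] r' by simp
qed

lemma eq_at_0:
  fixes f g :: "complex \<Rightarrow> complex"
  assumes "isCont f 0" "isCont g 0" "d > 0" "\<And>t. 0 < cmod t \<Longrightarrow> cmod t < d \<Longrightarrow> f t = g t"
  shows "f 0 = g 0"
proof -
  have ev: "eventually (\<lambda>t. f t = g t) (at 0)"
    unfolding eventually_at using assms(3,4) by (auto intro!: exI[of _ d] simp: dist_norm)
  have "(f \<longlongrightarrow> f 0) (at 0)" using assms(1) isCont_def by blast
  hence "(g \<longlongrightarrow> f 0) (at 0)" using tendsto_cong[OF ev] by simp
  moreover have "(g \<longlongrightarrow> g 0) (at 0)" using assms(2) isCont_def by blast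
  ultimately show ?thesis using tendsto_unique[OF at_neq_bot] by blast
qed

lemma mat_mulv: "mat l *v (v::complex^'n) = l *s v"
proof -
  have "(\<Sum>j\<in>UNIV. (if i = j then l else 0) * v $ j) = l * v $ i" for i
  proof -
    have "(\<Sum>j\<in>UNIV. (if i = j then l else 0) * v $ j) = (\<Sum>j\<in>UNIV. if i = j then l * v $ j else 0)"
      by (rule sum.cong) auto
    then show ?thesis by simp
  qed
  then show ?thesis by (simp add: vec_eq_iff matrix_vector_mult_def mat_def)
qed

lemma eig_transpose:
  fixes M :: "complex^'n^'n"
  assumes "v \<noteq> 0" "transpose M *v v = l *s v"
  shows "is_eigenvalue M l"
proof -
  have "transpose (M - mat l) = transpose M - mat l"
    by (simp add: vec_eq_iff transpose_def mat_def)
  hence "transpose (M - mat l) *v v = transpose M *v v - mat l *v v"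
    by (simp add: matrix_vector_mult_diff_rdistrib)
  hence "transpose (M - mat l) *v v = 0"
    using assms(2) by (simp add: mat_mulv)
  hence "\<not> (\<exists>B. B ** transpose (M - mat l) = mat 1)"
    using matrix_left_invertible_ker assms(1) by blast
  hence "\<not> invertible (transpose (M - mat l))" using invertible_left_inverse by blast
  hence "det (M - mat l) = 0" using invertible_det_nz det_transpose by metis
  hence "\<not> (\<exists>B. B ** (M - mat l) = mat 1)" using invertible_det_nz invertible_left_inverse by metis
  then obtain x where "(M - mat l) *v x = 0" "x \<noteq> 0" using matrix_left_invertible_ker by blast
  then show ?thesis unfolding is_eigenvalue_def
    by (intro exI[of _ x]) (simp add: matrix_vector_mult_diff_rdistrib mat_mulv)
qed

lemma matrix_add_rdistrib': "((A::complex^'n^'n) + B) ** C = A ** C + B ** C"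
  by (simp add: vec_eq_iff matrix_matrix_mult_def sum.distrib distrib_right)

lemma ent_sums:
  fixes X :: "nat \<Rightarrow> complex^'n^'n"
  assumes "X sums s" shows "(\<lambda>k. X k $ i $ j) sums (s $ i $ j)"
proof -
  have "(\<lambda>k. X k $ i) sums (s $ i)" by (rule bounded_linear.sums[OF bounded_linear_vec_nth assms])
  then show ?thesis by (rule bounded_linear.sums[OF bounded_linear_vec_nth])
qed

lemma powi_sums:
  fixes b :: "nat \<Rightarrow> complex^'n^'n"
  assumes "(\<lambda>k. cscale (t powi (m + int k)) (b k)) sums S" "t \<noteq> 0"
  shows "(\<lambda>k. b k $ i $ j * t ^ k) sums (S $ i $ j / t powi m)"
proof -
  have "(\<lambda>k. t powi (m + int k) * b k $ i $ j) sums (S $ i $ j)"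
    using ent_sums[OF assms(1), of i j] by (simp add: cscale_def)
  moreover have "t powi (m + int k) * b k $ i $ j = t powi m * (b k $ i $ j * t ^ k)" for k
    using assms(2) by (simp add: power_int_add power_int_of_nat)
  ultimately have "(\<lambda>k. t powi m * (b k $ i $ j * t ^ k)) sums (S $ i $ j)" by simp
  moreover have "t powi m \<noteq> 0" using assms(2) by (simp add: power_int_eq_0_iff)
  ultimately have "(\<lambda>k. t powi m * (b k $ i $ j * t ^ k)) sums (t powi m * (S $ i $ j / t powi m))"
    by simp
  then show ?thesis using sums_mult_iff \<open>t powi m \<noteq> 0\<close> by blast
qed

lemma DPB:
  assumes "t \<noteq> 0" "(PS f has_field_derivative PS (diffs f) t) (at t)"
  shows "((\<lambda>s. s powi q * PS f s) has_field_derivative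
        (of_int q * t powi (q - 1) * PS f t + PS (diffs f) t * t powi q)) (at t)"
proof -
  have "((\<lambda>s. s powi q) has_field_derivative of_int q * t powi (q - 1)) (at t)"
    using DERIV_power_int[where f="\<lambda>x. x" and d=1 and n=q and x=t and s=UNIV] assms(1) by simp
  from DERIV_mult[OF this assms(2)] show ?thesis by simp
qed

theorem proposition2p5:
  fixes A W :: "complex \<Rightarrow> complex ^ 'n ^ 'n"
    and x0 :: complex and \<rho>0 :: real
    and am1 :: "complex ^ 'n ^ 'n"
    and a b c :: "nat \<Rightarrow> complex ^ 'n ^ 'n"
    and m p :: int
  assumes rho_pos: "\<rho>0 > 0"
    and A_laurent: "\<And>x. 0 < cmod (x - x0) \<Longrightarrow> cmod (x - x0) < \<rho>0 \<Longrightarrow>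
          (\<lambda>k. cscale ((x - x0) ^ k) (a k)) sums (A x - cscale (1 / (x - x0)) am1)"
    and W_series: "\<And>x. 0 < cmod (x - x0) \<Longrightarrow> cmod (x - x0) < \<rho>0 \<Longrightarrow>
          (\<lambda>k. cscale ((x - x0) powi (m + int k)) (b k)) sums W x"
    and b_lead: "b 0 \<noteq> 0"
    and W_ode: "\<And>x i j. 0 < cmod (x - x0) \<Longrightarrow> cmod (x - x0) < \<rho>0 \<Longrightarrow>
          ((\<lambda>y. W y $ i $ j) has_field_derivative (A x ** W x) $ i $ j) (at x)"
    and W_inv: "\<And>x. 0 < cmod (x - x0) \<Longrightarrow> cmod (x - x0) < \<rho>0 \<Longrightarrow> invertible (W x)"
    and Winv_series: "\<And>x. 0 < cmod (x - x0) \<Longrightarrow> cmod (x - x0) < \<rho>0 \<Longrightarrow>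
          (\<lambda>k. cscale ((x - x0) powi (p + int k)) (c k)) sums matrix_inv (W x)"
    and c_lead: "c 0 \<noteq> 0"
  shows "is_eigenvalue am1 (of_int m) \<and> is_eigenvalue am1 (of_int (- p)) \<and>
         (is_scalar_matrix am1 \<or>
          (\<exists>k1 k2 :: int. k1 \<noteq> k2 \<and> is_eigenvalue am1 (of_int k1) \<and> is_eigenvalue am1 (of_int k2)))"
proof -
  define d where "d = \<rho>0 / 2"
  have d_pos: "d > 0" and d_lt: "d < \<rho>0" using rho_pos by (auto simp: d_def)
  define K where "K = complex_of_real d"
  have K0: "0 < cmod K" "cmod K < \<rho>0" using d_pos d_lt by (auto simp: K_def)
  define fa where "fa i j k = a k $ i $ j" for i j k
  define fb where "fb i j k = b k $ i $ j" for i j k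
  define fc where "fc i j k = c k $ i $ j" for i j k
  define V where "V x = matrix_inv (W x)" for x
  define S where "S = ball (0::complex) d - {0}"
  have openS: "open S" unfolding S_def by auto
  have inS: "t \<in> S \<longleftrightarrow> 0 < cmod t \<and> cmod t < d" for t unfolding S_def by auto

  have Asum: "(\<lambda>k. fa i j k * t ^ k) sums (A (t + x0) $ i $ j - am1 $ i $ j / t)"
    if "0 < cmod t" "cmod t < \<rho>0" for t i j
  proof -
    have "(\<lambda>k. cscale (t ^ k) (a k) $ i $ j) sums ((A (t + x0) - cscale (1 / t) am1) $ i $ j)"
      using ent_sums[OF A_laurent[of "t + x0"]] that by simp
    then show ?thesis by (simp add: cscale_def fa_def mult.commute)
  qed
  have Wsum: "(\<lambda>k. fb i j k * t ^ k) sums (W (t + x0) $ i $ j / t powi m)"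
    if "0 < cmod t" "cmod t < \<rho>0" for t i j
  proof -
    have "(\<lambda>k. cscale (t powi (m + int k)) (b k)) sums W (t + x0)"
      using W_series[of "t + x0"] that by simp
    from powi_sums[OF this] that show ?thesis by (simp add: fb_def)
  qed
  have Vsum: "(\<lambda>k. fc i j k * t ^ k) sums (V (t + x0) $ i $ j / t powi p)"
    if "0 < cmod t" "cmod t < \<rho>0" for t i j
  proof -
    have "(\<lambda>k. cscale (t powi (p + int k)) (c k)) sums V (t + x0)"
      using Winv_series[of "t + x0"] that by (simp add: V_def)
    from powi_sums[OF this] that show ?thesis by (simp add: fc_def)
  qed
  have sa: "summable (\<lambda>k. fa i j k * complex_of_real d ^ k)" for i j
    using Asum[OF K0, of i j] unfolding K_def by (rule sums_summable)
  have sb: "summable (\<lambda>k. fb i j k * complex_of_real d ^ k)" for i j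
    using Wsum[OF K0, of i j] unfolding K_def by (rule sums_summable)
  have sc: "summable (\<lambda>k. fc i j k * complex_of_real d ^ k)" for i j
    using Vsum[OF K0, of i j] unfolding K_def by (rule sums_summable)
  define G where "G i j = PS (fa i j)" for i j
  define B where "B i j = PS (fb i j)" for i j
  define C where "C i j = PS (fc i j)" for i j
  define Bd where "Bd i j = PS (diffs (fb i j))" for i j
  define Cd where "Cd i j = PS (diffs (fc i j))" for i j
  have contG0: "isCont (G i j) 0" for i j using PS_props(2)[OF sa[of i j] d_pos, of 0] d_pos by (simp add: G_def)
  have contB0: "isCont (B i j) 0" for i j using PS_props(2)[OF sb[of i j] d_pos, of 0] d_pos by (simp add: B_def)
  have contC0: "isCont (C i j) 0" for i j using PS_props(2)[OF sc[of i j] d_pos, of 0] d_pos by (simp add: C_def)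
  have contBd0: "isCont (Bd i j) 0" for i j using PS_props(3)[OF sb[of i j] d_pos, of 0] d_pos by (simp add: Bd_def)
  have contCd0: "isCont (Cd i j) 0" for i j using PS_props(3)[OF sc[of i j] d_pos, of 0] d_pos by (simp add: Cd_def)
  have G0: "G i j 0 = a 0 $ i $ j" for i j by (simp only: G_def PS_def powser_zero fa_def)
  have B0: "B i j 0 = b 0 $ i $ j" for i j by (simp only: B_def PS_def powser_zero fb_def)
  have C0: "C i j 0 = c 0 $ i $ j" for i j by (simp only: C_def PS_def powser_zero fc_def)

  have Aeq: "A (t + x0) $ i $ j = am1 $ i $ j / t + G i j t" if "0 < cmod t" "cmod t < d" for t i j
  proof -
    have "(\<lambda>k. fa i j k * t ^ k) sums (A (t + x0) $ i $ j - am1 $ i $ j / t)"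
      using Asum[of t i j] that d_lt by simp
    hence "G i j t = A (t + x0) $ i $ j - am1 $ i $ j / t" by (simp add: G_def PS_def sums_iff)
    then show ?thesis by simp
  qed
  have Weq: "W (t + x0) $ i $ j = t powi m * B i j t" if "0 < cmod t" "cmod t < d" for t i j
  proof -
    have "(\<lambda>k. fb i j k * t ^ k) sums (W (t + x0) $ i $ j / t powi m)"
      using Wsum[of t i j] that d_lt by simp
    hence "B i j t = W (t + x0) $ i $ j / t powi m" by (simp add: B_def PS_def sums_iff)
    moreover have "t powi m \<noteq> 0" using that by (auto simp: power_int_eq_0_iff)
    ultimately show ?thesis by simp
  qed
  have Veq: "V (t + x0) $ i $ j = t powi p * C i j t" if "0 < cmod t" "cmod t < d" for t i j
  proof -
    have "(\<lambda>k. fc i j k * t ^ k) sums (V (t + x0) $ i $ j / t powi p)"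
      using Vsum[of t i j] that d_lt by simp
    hence "C i j t = V (t + x0) $ i $ j / t powi p" by (simp add: C_def PS_def sums_iff)
    moreover have "t powi p \<noteq> 0" using that by (auto simp: power_int_eq_0_iff)
    ultimately show ?thesis by simp
  qed
  have VW: "W (t + x0) ** V (t + x0) = mat 1 \<and> V (t + x0) ** W (t + x0) = mat 1"
    if "0 < cmod t" "cmod t < d" for t
  proof -
    have "invertible (W (t + x0))" using W_inv[of "t + x0"] that d_lt by simp
    then show ?thesis unfolding invertible_def V_def matrix_inv_def by (rule someI_ex)
  qed
  have DW: "((\<lambda>s. W (s + x0) $ i $ j) has_field_derivative (A (t + x0) ** W (t + x0)) $ i $ j) (at t)"
    if "0 < cmod t" "cmod t < d" for t i j
  proof -
    have "((\<lambda>y. W y $ i $ j) has_field_derivative (A (t + x0) ** W (t + x0)) $ i $ j) (at (t + x0))"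
      using W_ode[of "t + x0" i j] that d_lt by simp
    then show ?thesis by (simp add: DERIV_shift)
  qed
  have derB: "(B i j has_field_derivative Bd i j t) (at t)" if "cmod t < d" for t i j
    using PS_props(1)[OF sb[of i j] d_pos that] by (simp add: B_def Bd_def)
  have derC: "(C i j has_field_derivative Cd i j t) (at t)" if "cmod t < d" for t i j
    using PS_props(1)[OF sc[of i j] d_pos that] by (simp add: C_def Cd_def)

  have DWeq: "(A (t + x0) ** W (t + x0)) $ i $ j = of_int m * t powi (m - 1) * B i j t + Bd i j t * t powi m"
    if "0 < cmod t" "cmod t < d" for t i j
  proof -
    have "((\<lambda>s. s powi m * B i j s) has_field_derivative
        (of_int m * t powi (m - 1) * B i j t + Bd i j t * t powi m)) (at t)"
      using DPB[of t "fb i j" m] derB[OF that(2)] that by (simp add: B_def Bd_def)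
    hence "((\<lambda>s. W (s + x0) $ i $ j) has_field_derivative
        (of_int m * t powi (m - 1) * B i j t + Bd i j t * t powi m)) (at t)"
      by (rule has_field_derivative_transform_within_open[OF _ openS])
         (use that inS Weq in auto)
    then show ?thesis using DW[OF that] DERIV_unique by blast
  qed
  have E1: "(\<Sum>l\<in>UNIV. (am1 $ i $ l + t * G i l t) * B l j t) = of_int m * B i j t + t * Bd i j t"
    if "0 < cmod t" "cmod t < d" for t i j
  proof -
    have t0: "t \<noteq> 0" using that by auto
    define u where "u = t powi (m - 1)"
    have u0: "u \<noteq> 0" using t0 by (simp add: u_def power_int_eq_0_iff)
    have tm: "t powi m = u * t" using power_int_add_1[of t "m - 1"] t0 by (simp add: u_def)
    have "(A (t + x0) ** W (t + x0)) $ i $ j = (\<Sum>l\<in>UNIV. (am1 $ i $ l / t + G i l t) * (t powi m * B l j t))"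
      using that by (simp add: matrix_matrix_mult_def Aeq Weq)
    also have "\<dots> = u * (\<Sum>l\<in>UNIV. (am1 $ i $ l + t * G i l t) * B l j t)"
      unfolding sum_distrib_left by (rule sum.cong) (use t0 in \<open>auto simp: tm field_simps\<close>)
    finally have "u * (\<Sum>l\<in>UNIV. (am1 $ i $ l + t * G i l t) * B l j t) = u * (of_int m * B i j t + t * Bd i j t)"
      using DWeq[OF that, of i j] by (simp add: tm u_def[symmetric] algebra_simps)
    then show ?thesis using u0 by simp
  qed
  have E1_0: "(\<Sum>l\<in>UNIV. am1 $ i $ l * b 0 $ l $ j) = of_int m * b 0 $ i $ j" for i j
  proof -
    have "(\<lambda>t. \<Sum>l\<in>UNIV. (am1 $ i $ l + t * G i l t) * B l j t) 0 = (\<lambda>t. of_int m * B i j t + t * Bd i j t) 0"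
      by (rule eq_at_0[OF _ _ d_pos]) (auto intro!: continuous_intros contG0 contB0 contBd0 E1)
    then show ?thesis by (simp add: B0)
  qed
  have eig_m: "is_eigenvalue am1 (of_int m)"
  proof -
    obtain i j where ij: "b 0 $ i $ j \<noteq> 0" using b_lead by (metis vec_eq_iff zero_index)
    define v where "v = (\<chi> l. b 0 $ l $ j)"
    have "v \<noteq> 0" using ij by (auto simp: v_def vec_eq_iff)
    moreover have "am1 *v v = of_int m *s v"
      by (simp add: vec_eq_iff matrix_vector_mult_def v_def E1_0)
    ultimately show ?thesis unfolding is_eigenvalue_def by blast
  qed
  define Vd where "Vd i j t = of_int p * t powi (p - 1) * C i j t + Cd i j t * t powi p" for i j t
  have DV: "((\<lambda>s. V (s + x0) $ i $ j) has_field_derivative Vd i j t) (at t)"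
    if "0 < cmod t" "cmod t < d" for t i j
  proof -
    have "((\<lambda>s. s powi p * C i j s) has_field_derivative Vd i j t) (at t)"
      using DPB[of t "fc i j" p] derC[OF that(2)] that by (simp add: C_def Cd_def Vd_def)
    then show ?thesis
      by (rule has_field_derivative_transform_within_open[OF _ openS])
         (use that inS Veq in auto)
  qed
  have Vmat: "V (t + x0) ** A (t + x0) + (\<chi> i j. Vd i j t) = 0"
    if "0 < cmod t" "cmod t < d" for t
  proof -
    define Wm where "Wm = W (t + x0)"
    define Vm where "Vm = V (t + x0)"
    define Am where "Am = A (t + x0)"
    define AWm where "AWm = Am ** Wm"
    define VD where "VD = (\<chi> i j. Vd i j t)"
    have "(\<Sum>l\<in>UNIV. Vd i l t * Wm $ l $ j + AWm $ l $ j * Vm $ i $ l) = 0" for i j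
    proof -
      have D1: "((\<lambda>s. \<Sum>l\<in>UNIV. V (s + x0) $ i $ l * W (s + x0) $ l $ j) has_field_derivative
          (\<Sum>l\<in>UNIV. Vd i l t * Wm $ l $ j + AWm $ l $ j * Vm $ i $ l)) (at t)"
        unfolding Wm_def Vm_def AWm_def Am_def
        by (rule DERIV_sum, rule DERIV_mult) (use DV DW that in auto)
      have "((\<lambda>s. (mat 1 :: complex^'n^'n) $ i $ j) has_field_derivative 0) (at t)"
        by (rule DERIV_const)
      hence D2: "((\<lambda>s. \<Sum>l\<in>UNIV. V (s + x0) $ i $ l * W (s + x0) $ l $ j) has_field_derivative 0) (at t)"
      proof (rule has_field_derivative_transform_within_open[OF _ openS])
        show "t \<in> S" using that inS by auto
        fix s assume "s \<in> S"
        hence "0 < cmod s" "cmod s < d" using inS by auto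
        hence "V (s + x0) ** W (s + x0) = mat 1" using VW[of s] by simp
        moreover have "(V (s + x0) ** W (s + x0)) $ i $ j = (\<Sum>l\<in>UNIV. V (s + x0) $ i $ l * W (s + x0) $ l $ j)"
          by (simp only: matrix_matrix_mult_def vec_lambda_beta)
        ultimately show "(mat 1 :: complex^'n^'n) $ i $ j = (\<Sum>l\<in>UNIV. V (s + x0) $ i $ l * W (s + x0) $ l $ j)"
          by simp
      qed
      show ?thesis using DERIV_unique[OF D1 D2] .
    qed
    hence "VD ** Wm + Vm ** AWm = 0"
      by (simp add: vec_eq_iff matrix_matrix_mult_def VD_def sum.distrib[symmetric] mult.commute)
    hence "(VD ** Wm + Vm ** AWm) ** Vm = 0" by simp
    moreover have "Wm ** Vm = mat 1" using VW[OF that] by (simp add: Wm_def Vm_def)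
    ultimately have "VD + Vm ** Am = 0"
      by (simp add: matrix_add_rdistrib' AWm_def matrix_mul_assoc[symmetric])
    then show ?thesis by (simp add: VD_def Vm_def Am_def add.commute)
  qed
  have E2: "of_int p * C i j t + t * Cd i j t + (\<Sum>l\<in>UNIV. C i l t * (am1 $ l $ j + t * G l j t)) = 0"
    if "0 < cmod t" "cmod t < d" for t i j
  proof -
    have t0: "t \<noteq> 0" using that by auto
    define u where "u = t powi (p - 1)"
    have u0: "u \<noteq> 0" using t0 by (simp add: u_def power_int_eq_0_iff)
    have tp: "t powi p = u * t" using power_int_add_1[of t "p - 1"] t0 by (simp add: u_def)
    have "(V (t + x0) ** A (t + x0) + (\<chi> i j. Vd i j t)) $ i $ j = 0" using Vmat[OF that] by simp
    hence "(\<Sum>l\<in>UNIV. (t powi p * C i l t) * (am1 $ l $ j / t + G l j t)) + Vd i j t = 0"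
      using that by (simp add: matrix_matrix_mult_def Aeq Veq)
    moreover have "(\<Sum>l\<in>UNIV. (t powi p * C i l t) * (am1 $ l $ j / t + G l j t))
        = u * (\<Sum>l\<in>UNIV. C i l t * (am1 $ l $ j + t * G l j t))"
      unfolding sum_distrib_left by (rule sum.cong) (use t0 in \<open>auto simp: tp field_simps\<close>)
    moreover have "Vd i j t = u * (of_int p * C i j t + t * Cd i j t)"
      by (simp add: Vd_def tp u_def[symmetric] algebra_simps)
    ultimately have "u * (of_int p * C i j t + t * Cd i j t + (\<Sum>l\<in>UNIV. C i l t * (am1 $ l $ j + t * G l j t))) = 0"
      by (simp add: algebra_simps)
    then show ?thesis using u0 by simp
  qed
  have E2_0: "of_int p * c 0 $ i $ j + (\<Sum>l\<in>UNIV. c 0 $ i $ l * am1 $ l $ j) = 0" for i j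
  proof -
    have "(\<lambda>t. of_int p * C i j t + t * Cd i j t + (\<Sum>l\<in>UNIV. C i l t * (am1 $ l $ j + t * G l j t))) 0 = (\<lambda>t. 0) 0"
      by (rule eq_at_0[OF _ _ d_pos]) (auto intro!: continuous_intros contG0 contC0 contCd0 E2)
    then show ?thesis by (simp add: C0)
  qed
  have eig_p: "is_eigenvalue am1 (of_int (- p))"
  proof -
    obtain i j where ij: "c 0 $ i $ j \<noteq> 0" using c_lead by (metis vec_eq_iff zero_index)
    define v where "v = (\<chi> l. c 0 $ i $ l)"
    have "v \<noteq> 0" using ij by (auto simp: v_def vec_eq_iff)
    moreover have "transpose am1 *v v = of_int (- p) *s v"
    proof -
      have "(\<Sum>l\<in>UNIV. am1 $ l $ k * c 0 $ i $ l) = - of_int p * c 0 $ i $ k" for k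
        using E2_0[of i k] by (simp add: mult.commute eq_neg_iff_add_eq_0 add.commute)
      then show ?thesis by (simp add: vec_eq_iff matrix_vector_mult_def v_def transpose_def)
    qed
    ultimately show ?thesis using eig_transpose by blast
  qed
  have scal: "is_scalar_matrix am1" if mp: "m + p = 0"
  proof -
    have E3: "(\<Sum>l\<in>UNIV. B i l t * C l j t) = (mat 1 :: complex^'n^'n) $ i $ j"
      if "0 < cmod t" "cmod t < d" for t i j
    proof -
      have t0: "t \<noteq> 0" using that by auto
      have one: "t powi m * t powi p = 1" using power_int_add[of t m p] t0 mp by simp
      have "(mat 1 :: complex^'n^'n) $ i $ j = (W (t + x0) ** V (t + x0)) $ i $ j" using VW[OF that] by simp
      also have "\<dots> = (\<Sum>l\<in>UNIV. (t powi m * B i l t) * (t powi p * C l j t))"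
        using that by (simp add: matrix_matrix_mult_def Weq Veq)
      also have "\<dots> = (\<Sum>l\<in>UNIV. B i l t * C l j t)"
      proof (rule sum.cong)
        fix l
        have "(t powi m * B i l t) * (t powi p * C l j t) = (t powi m * t powi p) * (B i l t * C l j t)"
          by (simp only: ac_simps)
        then show "(t powi m * B i l t) * (t powi p * C l j t) = B i l t * C l j t" by (simp add: one)
      qed simp
      finally show ?thesis by simp
    qed
    have E3_0: "(\<Sum>l\<in>UNIV. b 0 $ i $ l * c 0 $ l $ j) = (mat 1 :: complex^'n^'n) $ i $ j" for i j
    proof -
      have "(\<lambda>t. \<Sum>l\<in>UNIV. B i l t * C l j t) 0 = (\<lambda>t. (mat 1 :: complex^'n^'n) $ i $ j) 0"
        by (rule eq_at_0[OF _ _ d_pos]) (auto intro!: continuous_intros contB0 contC0 E3)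
      then show ?thesis by (simp add: B0 C0)
    qed
    have "am1 $ i $ j = mat (of_int m) $ i $ j" for i j
    proof -
      have "am1 $ i $ j = (\<Sum>k\<in>UNIV. am1 $ i $ k * (mat 1 :: complex^'n^'n) $ k $ j)"
      proof -
        have "(am1 ** mat 1) $ i $ j = (\<Sum>k\<in>UNIV. am1 $ i $ k * (mat 1 :: complex^'n^'n) $ k $ j)"
          by (simp only: matrix_matrix_mult_def vec_lambda_beta)
        then show ?thesis by (simp only: matrix_mul_rid)
      qed
      also have "\<dots> = (\<Sum>k\<in>UNIV. \<Sum>l\<in>UNIV. am1 $ i $ k * (b 0 $ k $ l * c 0 $ l $ j))"
        by (simp add: E3_0[symmetric] sum_distrib_left)
      also have "\<dots> = (\<Sum>l\<in>UNIV. \<Sum>k\<in>UNIV. am1 $ i $ k * b 0 $ k $ l * c 0 $ l $ j)"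
        by (subst sum.swap) (simp add: mult.assoc)
      also have "\<dots> = (\<Sum>l\<in>UNIV. of_int m * b 0 $ i $ l * c 0 $ l $ j)"
        by (simp add: sum_distrib_right[symmetric] E1_0)
      also have "\<dots> = of_int m * (mat 1 :: complex^'n^'n) $ i $ j"
        by (simp add: E3_0[symmetric] sum_distrib_left mult.assoc)
      finally show ?thesis by (simp add: mat_def)
    qed
    then show ?thesis unfolding is_scalar_matrix_def by (auto simp: vec_eq_iff)
  qed
  show ?thesis
  proof (cases "m + p = 0")
    case True then show ?thesis using eig_m eig_p scal by blast
  next
    case False
    then have "m \<noteq> - p" by simp
    then show ?thesis using eig_m eig_p by blast
  qed
qed

end
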